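(* Let $k\ge 2$. Then for all sufficiently large $n$, $$N(CM,k,n)\ge\begin{cases} \frac{2n}{k+1} & \text{if } k \text{ is even and } n \text{ is even},\\[2pt] \frac{2n-1}{k+1} & \text{if } k \text{ is even and } n \text{ is odd},\\[2pt] \left\lceil \frac{n}{k}\,\mathsf{d}(k-1,n-1)\right\rceil & \text{if } k \text{ is odd and } n \text{ is even},\\[2pt] \left\lceil \frac{n-1}{2k}\,\mathsf{d}(k-1,n-1)\right\rceil & \text{if } k \text{ is odd and } n \text{ is odd}.\end{cases}$$
   Context: We are given $n$ balls, the set $[n]=\{1,\dots,n\}$, each colored with one of two colors by an unknown coloring. A ball $i$ is a majority ball if more than $n/2$ balls have the same color as $i$. A query is a subset $Q\subseteq[n]$ with $|Q|=k$. In the Counting Model (CM), the answer to a query $Q$ is the number $i\le k/2$ such that $Q$ contains exactly $i$ balls of one of the colors (and $k-i$ of the other); no indication of which color is given. A non-adaptive strategy is a family of queries $Q_1,\dots,Q_q$ fixed in advance. It succeeds if for every coloring, the answers determine the outcome: either every coloring consistent with the answers has no majority ball, or there is a ball that is a majority ball in every coloring consistent with the answers. $N(CM,k,n)$ is the minimum number of queries in a successful non-adaptive strategy. A 2-coloring of a finite set is balanced if the sizes of the two color classes differ by at most one. A hypergraph has Property C if its vertices can be 2-colored so that every edge is balanced. For $k\ge 2$, $\mathsf{d}(k,n)$ denotes the minimum number of edges of a $k$-uniform hypergraph on $n$ vertices that does not have Property C. *)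

theory Defs
  imports Main "HOL-Library.Extended_Nat"
begin

text \<open>Balls are the set {1..n}; a coloring is a function nat => bool
  (only its values on {1..n} matter).\<close>

definition is_query :: "nat \<Rightarrow> nat \<Rightarrow> nat set \<Rightarrow> bool" where
  "is_query k n Q \<longleftrightarrow> Q \<subseteq> {1..n} \<and> card Q = k"

definition cm_answer :: "(nat \<Rightarrow> bool) \<Rightarrow> nat set \<Rightarrow> nat" where
  "cm_answer c Q = min (card {x\<in>Q. c x}) (card {x\<in>Q. \<not> c x})"

definition majority_ball :: "nat \<Rightarrow> (nat \<Rightarrow> bool) \<Rightarrow> nat \<Rightarrow> bool" where
  "majority_ball n c i \<longleftrightarrow> i \<in> {1..n} \<and> 2 * card {j\<in>{1..n}. c j = c i} > n"

definition cm_consistent :: "nat set list \<Rightarrow> (nat \<Rightarrow> bool) \<Rightarrow> (nat \<Rightarrow> bool) \<Rightarrow> bool" where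
  "cm_consistent Qs c c' \<longleftrightarrow> (\<forall>Q \<in> set Qs. cm_answer c' Q = cm_answer c Q)"

definition cm_successful :: "nat \<Rightarrow> nat \<Rightarrow> nat set list \<Rightarrow> bool" where
  "cm_successful k n Qs \<longleftrightarrow>
     (\<forall>Q \<in> set Qs. is_query k n Q) \<and>
     (\<forall>c. (\<forall>c'. cm_consistent Qs c c' \<longrightarrow> \<not> (\<exists>i. majority_ball n c' i))
        \<or> (\<exists>i\<in>{1..n}. \<forall>c'. cm_consistent Qs c c' \<longrightarrow> majority_ball n c' i))"

text \<open>N(CM,k,n); infinity if no successful non-adaptive strategy exists.\<close>
definition N_CM :: "nat \<Rightarrow> nat \<Rightarrow> enat" where
  "N_CM k n = Inf (enat ` {q. \<exists>Qs. length Qs = q \<and> cm_successful k n Qs})"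

definition balanced_on :: "(nat \<Rightarrow> bool) \<Rightarrow> nat set \<Rightarrow> bool" where
  "balanced_on c e \<longleftrightarrow>
     (card {x\<in>e. c x} \<le> card {x\<in>e. \<not> c x} + 1 \<and> card {x\<in>e. \<not> c x} \<le> card {x\<in>e. c x} + 1)"

definition property_C :: "nat \<Rightarrow> nat set set \<Rightarrow> bool" where
  "property_C n E \<longleftrightarrow> (\<exists>c. \<forall>e\<in>E. balanced_on c e)"

definition d_C :: "nat \<Rightarrow> nat \<Rightarrow> nat" where
  "d_C k n = Inf {m. \<exists>E. (\<forall>e\<in>E. e \<subseteq> {1..n} \<and> card e = k) \<and> card E = m \<and> \<not> property_C n E}"

definition cm_bound :: "nat \<Rightarrow> nat \<Rightarrow> real" where
  "cm_bound k n =
     (if even k \<and> even n then 2 * real n / (real k + 1)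
      else if even k \<and> odd n then (2 * real n - 1) / (real k + 1)
      else if odd k \<and> even n then real_of_int \<lceil>real n / real k * real (d_C (k - 1) (n - 1))\<rceil>
      else real_of_int \<lceil>(real n - 1) / (2 * real k) * real (d_C (k - 1) (n - 1))\<rceil>)"

end

theory Submission
  imports Defs
begin


definition tc :: "nat \<Rightarrow> (nat \<Rightarrow> bool) \<Rightarrow> nat" where
  "tc n c = card {x\<in>{1..n}. c x}"

lemma card_neg_split:
  assumes "finite Q"
  shows "card {x\<in>Q. \<not> c x} = card Q - card {x\<in>Q. c x}"
proof -
  have "{x\<in>Q. \<not> c x} = Q - {x\<in>Q. c x}" by auto
  then show ?thesis using assms by (simp add: card_Diff_subset)
qed

lemma answer_eq_cnt:
  assumes "finite Q"
    and "card {x\<in>Q. c' x} = card {x\<in>Q. c x} \<or> card {x\<in>Q. c' x} = card Q - card {x\<in>Q. c x}"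
    and "card {x\<in>Q. c x} \<le> card Q"
  shows "cm_answer c' Q = cm_answer c Q"
proof -
  have "card {x\<in>Q. c' x} \<le> card Q" using assms(1) by (intro card_mono) auto
  then show ?thesis using assms unfolding cm_answer_def
    by (auto simp: card_neg_split)
qed

lemma answer_agree:
  assumes "\<forall>x\<in>Q. c' x = c x"
  shows "cm_answer c' Q = cm_answer c Q"
proof -
  have "{x\<in>Q. c' x} = {x\<in>Q. c x}" "{x\<in>Q. \<not> c' x} = {x\<in>Q. \<not> c x}" using assms by auto
  then show ?thesis unfolding cm_answer_def by simp
qed

lemma cnt_up:
  assumes "finite Q" "x \<in> Q" "\<not> c x"
  shows "card {y\<in>Q. (c(x:=True)) y} = Suc (card {y\<in>Q. c y})"
proof -
  have "{y\<in>Q. (c(x:=True)) y} = insert x {y\<in>Q. c y}" using assms by auto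
  moreover have "x \<notin> {y\<in>Q. c y}" using assms by auto
  ultimately show ?thesis using assms by simp
qed

lemma cnt_down:
  assumes "finite Q" "x \<in> Q" "c x"
  shows "Suc (card {y\<in>Q. (c(x:=False)) y}) = card {y\<in>Q. c y}"
proof -
  have "{y\<in>Q. c y} = insert x {y\<in>Q. (c(x:=False)) y}" using assms by auto
  moreover have "x \<notin> {y\<in>Q. (c(x:=False)) y}" using assms by auto
  ultimately show ?thesis using assms by simp
qed

lemma cnt_out:
  assumes "x \<notin> Q"
  shows "{y\<in>Q. (c(x:=v)) y} = {y\<in>Q. c y}"
  using assms by auto

lemma maj_iff:
  "majority_ball n c i \<longleftrightarrow> i \<in> {1..n} \<and> (if c i then 2 * tc n c > n else 2 * (n - tc n c) > n)"
proof -
  have "{j\<in>{1..n}. c j = c i} = (if c i then {j\<in>{1..n}. c j} else {j\<in>{1..n}. \<not> c j})"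
    by auto
  moreover have "card {j\<in>{1..n}. \<not> c j} = n - card {j\<in>{1..n}. c j}"
    using card_neg_split[of "{1..n}" c] by simp
  ultimately show ?thesis unfolding majority_ball_def tc_def
    by (simp split: if_splits)
qed

lemma tc_le: "tc n c \<le> n"
proof -
  have "tc n c \<le> card {1..n}" unfolding tc_def by (intro card_mono) auto
  then show ?thesis by simp
qed

lemma has_maj:
  assumes "2 * tc n c \<noteq> n"
  shows "\<exists>i. majority_ball n c i"
proof (cases "2 * tc n c > n")
  case True
  then have "{x\<in>{1..n}. c x} \<noteq> {}" unfolding tc_def by (metis card.empty mult_0_right not_less_zero)
  then obtain i where "i \<in> {1..n}" "c i" by auto
  then show ?thesis using True by (auto simp: maj_iff)
next
  case False
  then have lt: "2 * tc n c < n" using assms by simp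
  then have "tc n c < n" by simp
  then have "{x\<in>{1..n}. c x} \<noteq> {1..n}" unfolding tc_def by auto
  then obtain i where "i \<in> {1..n}" "\<not> c i" by blast
  then show ?thesis using lt by (auto simp: maj_iff)
qed

lemma consistent_refl: "cm_consistent Qs c c"
  unfolding cm_consistent_def by simp

lemma break1:
  assumes "cm_successful k n Qs" "2 * tc n c0 = n" "cm_consistent Qs c0 c1" "2 * tc n c1 \<noteq> n"
  shows False
proof -
  from assms(1) have
    "(\<forall>c'. cm_consistent Qs c0 c' \<longrightarrow> \<not> (\<exists>i. majority_ball n c' i))
        \<or> (\<exists>i\<in>{1..n}. \<forall>c'. cm_consistent Qs c0 c' \<longrightarrow> majority_ball n c' i)"
    unfolding cm_successful_def by blast
  then show False
  proof
    assume "\<forall>c'. cm_consistent Qs c0 c' \<longrightarrow> \<not> (\<exists>i. majority_ball n c' i)"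
    then show False using assms(3) has_maj[OF assms(4)] by blast
  next
    assume "\<exists>i\<in>{1..n}. \<forall>c'. cm_consistent Qs c0 c' \<longrightarrow> majority_ball n c' i"
    then obtain i where "majority_ball n c0 i" using consistent_refl by blast
    then show False using assms(2) by (auto simp: maj_iff split: if_splits)
  qed
qed

lemma break2:
  assumes "cm_successful k n Qs" "2 * tc n c0 < n"
    and "\<forall>c\<in>C. cm_consistent Qs c0 c \<and> 2 * tc n c > n"
    and "\<forall>x\<in>{1..n}. \<exists>c\<in>C. c x = c0 x"
  shows False
proof -
  from assms(1) have
    "(\<forall>c'. cm_consistent Qs c0 c' \<longrightarrow> \<not> (\<exists>i. majority_ball n c' i))
        \<or> (\<exists>i\<in>{1..n}. \<forall>c'. cm_consistent Qs c0 c' \<longrightarrow> majority_ball n c' i)"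
    unfolding cm_successful_def by blast
  then show False
  proof
    assume "\<forall>c'. cm_consistent Qs c0 c' \<longrightarrow> \<not> (\<exists>i. majority_ball n c' i)"
    then show False using consistent_refl has_maj[of n c0] assms(2) by auto
  next
    assume "\<exists>i\<in>{1..n}. \<forall>c'. cm_consistent Qs c0 c' \<longrightarrow> majority_ball n c' i"
    then obtain i where i: "i \<in> {1..n}" "\<forall>c'. cm_consistent Qs c0 c' \<longrightarrow> majority_ball n c' i" by blast
    then have "majority_ball n c0 i" using consistent_refl by blast
    then have "\<not> c0 i" using assms(2) by (auto simp: maj_iff split: if_splits)
    obtain c where c: "c \<in> C" "c i = c0 i" using assms(4) i(1) by blast
    then have "majority_ball n c i" using i assms(3) by blast
    then show False using c \<open>\<not> c0 i\<close> assms(3) by (auto simp: maj_iff split: if_splits)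
  qed
qed



definition deg :: "nat set list \<Rightarrow> nat \<Rightarrow> nat" where
  "deg Qs i = card {t. t < length Qs \<and> i \<in> Qs ! t}"

lemma deg_sum_ind: "deg Qs i = (\<Sum>t<length Qs. if i \<in> Qs ! t then 1 else 0)"
proof -
  have "{t. t < length Qs \<and> i \<in> Qs ! t} = {..<length Qs} \<inter> {t. i \<in> Qs ! t}" by auto
  then show ?thesis unfolding deg_def by (simp add: sum.If_cases)
qed

lemma sum_deg:
  assumes "finite S"
  shows "(\<Sum>i\<in>S. deg Qs i) = (\<Sum>t<length Qs. card (Qs ! t \<inter> S))"
proof -
  have "(\<Sum>i\<in>S. deg Qs i) = (\<Sum>i\<in>S. \<Sum>t<length Qs. if i \<in> Qs ! t then 1 else 0)"
    by (simp add: deg_sum_ind)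
  also have "\<dots> = (\<Sum>t<length Qs. \<Sum>i\<in>S. if i \<in> Qs ! t then 1 else 0)"
    by (rule sum.swap)
  also have "\<dots> = (\<Sum>t<length Qs. card (Qs ! t \<inter> S))"
  proof (rule sum.cong)
    fix t
    have "{i\<in>S. i \<in> Qs ! t} = Qs ! t \<inter> S" by auto
    then show "(\<Sum>i\<in>S. if i \<in> Qs ! t then 1 else 0) = card (Qs ! t \<inter> S)"
      using assms by (simp add: sum.If_cases Int_commute)
  qed simp
  finally show ?thesis .
qed

lemma deg0: "deg Qs i = 0 \<Longrightarrow> t < length Qs \<Longrightarrow> i \<notin> Qs ! t"
  unfolding deg_def by auto

lemma deg1: assumes "deg Qs i = 1" "t < length Qs" "i \<in> Qs ! t" "t' < length Qs" "i \<in> Qs ! t'"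
  shows "t' = t"
proof -
  obtain a where "{t. t < length Qs \<and> i \<in> Qs ! t} = {a}" using assms(1) unfolding deg_def
    by (rule card_1_singletonE)
  then have "\<forall>s. (s < length Qs \<and> i \<in> Qs ! s) \<longleftrightarrow> s = a" by (simp add: set_eq_iff)
  then have "t = a" "t' = a" using assms(2-5) by auto
  then show ?thesis by simp
qed

lemma deg2: assumes "deg Qs i = 2" "t1 < length Qs" "i \<in> Qs ! t1" "t2 < length Qs" "i \<in> Qs ! t2"
  "t1 \<noteq> t2" "t' < length Qs" "i \<in> Qs ! t'"
  shows "t' = t1 \<or> t' = t2"
proof (rule ccontr)
  assume "\<not> (t' = t1 \<or> t' = t2)"
  then have "{t1, t2, t'} \<subseteq> {t. t < length Qs \<and> i \<in> Qs ! t}" "card {t1,t2,t'} = 3"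
    using assms by auto
  moreover have "finite {t. t < length Qs \<and> i \<in> Qs ! t}" by simp
  ultimately have "3 \<le> deg Qs i" unfolding deg_def
    by (metis card_mono)
  then show False using assms(1) by simp
qed

lemma extend:
  assumes "finite U" "U \<subseteq> {1..n}" "card {x\<in>U. c x} \<le> T" "T \<le> card {x\<in>U. c x} + (n - card U)"
  shows "\<exists>c0. (\<forall>x\<in>U. c0 x = c x) \<and> tc n c0 = T"
proof -
  define W where "W = {1..n} - U"
  have cW: "card W = n - card U" unfolding W_def using assms(1,2) by (simp add: card_Diff_subset)
  have hW: "T - card {x\<in>U. c x} \<le> card W" using assms(3,4) cW by linarith
  obtain W' where W': "W' \<subseteq> W" "card W' = T - card {x\<in>U. c x}" "finite W'"
    by (rule obtain_subset_with_card_n[OF hW])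
  define c0 where "c0 x = (if x \<in> U then c x else x \<in> W')" for x
  have "{x\<in>{1..n}. c0 x} = {x\<in>U. c x} \<union> W'" using W' assms(2) unfolding c0_def W_def by auto
  moreover have "{x\<in>U. c x} \<inter> W' = {}" using W' unfolding W_def by auto
  ultimately have "tc n c0 = card {x\<in>U. c x} + card W'" unfolding tc_def using assms(1) W'(3)
    by (simp add: card_Un_disjoint)
  then have "tc n c0 = T" using W'(2) assms(3) by simp
  moreover have "\<forall>x\<in>U. c0 x = c x" unfolding c0_def by simp
  ultimately show ?thesis by blast
qed

lemma two_halves:
  assumes "finite R" "finite R'" "card R = 2*h" "card R' = 2*h"
  shows "\<exists>S. S \<subseteq> R \<union> R' \<and> card (S \<inter> R) = h \<and> card (S \<inter> R') = h"
proof -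
  define A where "A = R \<inter> R'"
  define a where "a = card A"
  have aR: "a \<le> 2*h" unfolding a_def A_def using assms card_mono[OF assms(1), of "R \<inter> R'"] by simp
  have "card (R - R') = card R - card (R \<inter> R')" by (rule card_Diff_subset_Int) (use assms in simp)
  then have cB: "card (R - R') = 2*h - a" unfolding a_def A_def using assms(3) by simp
  have "card (R' - R) = card R' - card (R' \<inter> R)" by (rule card_Diff_subset_Int) (use assms in simp)
  then have cC: "card (R' - R) = 2*h - a" unfolding a_def A_def using assms(4) by (simp add: Int_commute)
  have hA: "a div 2 \<le> card A" unfolding a_def by simp
  obtain SA where SA: "SA \<subseteq> A" "card SA = a div 2" "finite SA"
    by (rule obtain_subset_with_card_n[OF hA])
  have le: "h - a div 2 \<le> 2*h - a" using aR by presburger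
  have le2: "a div 2 \<le> h" using aR by presburger
  have hB: "h - a div 2 \<le> card (R - R')" using cB le by simp
  have hC: "h - a div 2 \<le> card (R' - R)" using cC le by simp
  obtain SB where SB: "SB \<subseteq> R - R'" "card SB = h - a div 2" "finite SB"
    by (rule obtain_subset_with_card_n[OF hB])
  obtain SC where SC: "SC \<subseteq> R' - R" "card SC = h - a div 2" "finite SC"
    by (rule obtain_subset_with_card_n[OF hC])
  define S where "S = SA \<union> SB \<union> SC"
  have "S \<inter> R = SA \<union> SB" using SA(1) SB(1) SC(1) unfolding S_def A_def by blast
  moreover have "SA \<inter> SB = {}" using SA(1) SB(1) unfolding A_def by blast
  ultimately have "card (S \<inter> R) = card SA + card SB" by (simp add: card_Un_disjoint SA(3) SB(3))
  then have 1: "card (S \<inter> R) = h" using SA(2) SB(2) le2 by simp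
  have "S \<inter> R' = SA \<union> SC" using SA(1) SB(1) SC(1) unfolding S_def A_def by blast
  moreover have "SA \<inter> SC = {}" using SA(1) SC(1) unfolding A_def by blast
  ultimately have "card (S \<inter> R') = card SA + card SC" by (simp add: card_Un_disjoint SA(3) SC(3))
  then have 2: "card (S \<inter> R') = h" using SA(2) SC(2) le2 by simp
  have "S \<subseteq> R \<union> R'" using SA(1) SB(1) SC(1) unfolding S_def A_def by blast
  then show ?thesis using 1 2 by (intro exI[of _ S]) simp
qed



lemma bal_even:
  assumes "finite e" "balanced_on c e" "card e = 2*m"
  shows "card {x\<in>e. c x} = m"
proof -
  have le: "card {x\<in>e. c x} \<le> card e" using assms(1) by (intro card_mono) auto
  have "card {x\<in>e. c x} \<le> (card e - card {x\<in>e. c x}) + 1"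
       "card e - card {x\<in>e. c x} \<le> card {x\<in>e. c x} + 1"
    using assms(2) card_neg_split[OF assms(1), of c] unfolding balanced_on_def by simp_all
  then show ?thesis using le assms(3) by linarith
qed

lemma balanced_neg: "balanced_on (\<lambda>x. \<not> c x) e \<longleftrightarrow> balanced_on c e"
  unfolding balanced_on_def by auto

lemma balanced_image:
  assumes "inj_on r A"
  shows "balanced_on c' (r ` A) \<longleftrightarrow> balanced_on (\<lambda>x. c' (r x)) A"
proof -
  have 1: "{x\<in>r ` A. c' x} = r ` {x\<in>A. c' (r x)}" by auto
  have 2: "{x\<in>r ` A. \<not> c' x} = r ` {x\<in>A. \<not> c' (r x)}" by auto
  have "inj_on r {x\<in>A. c' (r x)}" "inj_on r {x\<in>A. \<not> c' (r x)}"
    using assms by (auto intro: inj_on_subset)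
  then have "card {x\<in>r ` A. c' x} = card {x\<in>A. c' (r x)}"
      "card {x\<in>r ` A. \<not> c' x} = card {x\<in>A. \<not> c' (r x)}"
    unfolding 1 2 by (simp_all add: card_image)
  then show ?thesis unfolding balanced_on_def by simp
qed

lemma dC_le:
  assumes "odd k" "3 \<le> k" "k \<le> N"
  shows "d_C (k-1) N \<le> k"
proof -
  define E where "E = (\<lambda>v. {1..k} - {v}) ` {1..k}"
  have inj: "inj_on (\<lambda>v. {1..k} - {v}) {1..k}"
    by (rule inj_onI) (auto simp: set_eq_iff)
  have cE: "card E = k" unfolding E_def using card_image[OF inj] by simp
  have edges: "\<forall>e\<in>E. e \<subseteq> {1..N} \<and> card e = k - 1" unfolding E_def using assms(3) by auto
  have notC: "\<not> property_C N E"
  proof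
    assume "property_C N E"
    then obtain c where c: "\<forall>e\<in>E. balanced_on c e" unfolding property_C_def by blast
    define a where "a = card {x\<in>{1..k}. c x}"
    obtain m where m: "k - 1 = 2*m" using assms(1) by (metis odd_two_times_div_two_nat)
    have key: "a - (if c v then 1 else 0) = m" if v: "v \<in> {1..k}" for v
    proof -
      have "balanced_on c ({1..k} - {v})" using c v unfolding E_def by blast
      then have "card {x\<in>{1..k} - {v}. c x} = m"
        using bal_even[of "{1..k} - {v}" c m] m v by simp
      moreover have "card {x\<in>{1..k}. c x} = card {x\<in>{1..k} - {v}. c x} + (if c v then 1 else 0)"
      proof (cases "c v")
        case True
        then have "{x\<in>{1..k}. c x} = insert v {x\<in>{1..k} - {v}. c x}" using v by auto
        then show ?thesis using True by simp
      next
        case False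
        then have "{x\<in>{1..k}. c x} = {x\<in>{1..k} - {v}. c x}" using v by auto
        then show ?thesis using False by simp
      qed
      ultimately show ?thesis unfolding a_def by simp
    qed
    have 1: "1 \<in> {1..k}" using assms by simp
    have same: "c v = c 1" if "v \<in> {1..k}" for v
    proof (rule ccontr)
      assume "c v \<noteq> c 1"
      have A1: "a \<ge> 1" if "c w" "w \<in> {1..k}" for w
      proof -
        have "{w} \<subseteq> {x\<in>{1..k}. c x}" using that by auto
        moreover have "finite {x\<in>{1..k}. c x}" by simp
        ultimately have "card {w} \<le> a" unfolding a_def by (rule card_mono[rotated])
        then show ?thesis by simp
      qed
      show False
      proof (cases "c v")
        case True
        then have "a \<ge> 1" using A1 that by blast
        then show False using key[OF that] key[OF 1] True \<open>c v \<noteq> c 1\<close> by auto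
      next
        case False
        then have "c 1" using \<open>c v \<noteq> c 1\<close> by simp
        then have "a \<ge> 1" using A1 1 by blast
        then show False using key[OF that] key[OF 1] False \<open>c 1\<close> by auto
      qed
    qed
    show False
    proof (cases "c 1")
      case True
      then have "{x\<in>{1..k}. c x} = {1..k}" using same by auto
      then have "a = k" unfolding a_def by simp
      then show False using key[OF 1] True m assms by simp
    next
      case False
      then have "{x\<in>{1..k}. c x} = {}" using same by auto
      then have "a = 0" unfolding a_def by simp
      then show False using key[OF 1] False m assms by simp
    qed
  qed
  have "k \<in> {m. \<exists>E. (\<forall>e\<in>E. e \<subseteq> {1..N} \<and> card e = k - 1) \<and> card E = m \<and> \<not> property_C N E}"
    using edges cE notC by blast
  then show ?thesis unfolding d_C_def Inf_nat_def by (rule Least_le)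
qed

lemma dC_lower:
  assumes "\<forall>e\<in>E. e \<subseteq> {1..N} \<and> card e = m" "card E < d_C m N"
  shows "property_C N E"
proof (rule ccontr)
  assume "\<not> property_C N E"
  then have "card E \<in> {m'. \<exists>E. (\<forall>e\<in>E. e \<subseteq> {1..N} \<and> card e = m) \<and> card E = m' \<and> \<not> property_C N E}"
    using assms(1) by blast
  then have "d_C m N \<le> card E" unfolding d_C_def Inf_nat_def by (rule Least_le)
  then show False using assms(2) by simp
qed

lemma flip_odd:
  assumes "finite Q" "x \<in> Q" "\<not> c0 x" "card Q = k" "odd k" "card {y\<in>Q. c0 y} = (k-1) div 2"
  shows "cm_answer (c0(x:=True)) Q = cm_answer c0 Q"
proof (rule answer_eq_cnt[OF assms(1)])
  have "card {y\<in>Q. (c0(x:=True)) y} = Suc (card {y\<in>Q. c0 y})" by (rule cnt_up[of Q x c0, OF assms(1-3)])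
  then show "card {y\<in>Q. (c0(x:=True)) y} = card {y\<in>Q. c0 y} \<or>
    card {y\<in>Q. (c0(x:=True)) y} = card Q - card {y\<in>Q. c0 y}"
  proof -
    obtain m where "k = 2*m+1" using assms(5) oddE by blast
    then show ?thesis using \<open>card {y\<in>Q. (c0(x:=True)) y} = Suc (card {y\<in>Q. c0 y})\<close> assms(4,6) by simp
  qed
  show "card {y\<in>Q. c0 y} \<le> card Q" using assms(1) by (intro card_mono) auto
qed

lemma queries:
  assumes "cm_successful k n Qs" "t < length Qs"
  shows "Qs ! t \<subseteq> {1..n}" "card (Qs ! t) = k" "finite (Qs ! t)"
proof -
  have "Qs ! t \<in> set Qs" using assms(2) by simp
  then have "is_query k n (Qs ! t)" using assms(1) unfolding cm_successful_def by blast
  then show "Qs ! t \<subseteq> {1..n}" "card (Qs ! t) = k" unfolding is_query_def by auto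
  then show "finite (Qs ! t)" using finite_subset by blast
qed

lemma consistent_by_nth:
  assumes "\<And>t. t < length Qs \<Longrightarrow> cm_answer c1 (Qs ! t) = cm_answer c0 (Qs ! t)"
  shows "cm_consistent Qs c0 c1"
  unfolding cm_consistent_def
proof
  fix Q assume "Q \<in> set Qs"
  then obtain t where "t < length Qs" "Q = Qs ! t" by (auto simp: in_set_conv_nth)
  then show "cm_answer c1 Q = cm_answer c0 Q" using assms by simp
qed

lemma tc_up:
  assumes "x \<in> {1..n}" "\<not> c x"
  shows "tc n (c(x:=True)) = Suc (tc n c)"
  unfolding tc_def by (rule cnt_up) (use assms in auto)



lemma oddk_main:
  assumes k: "odd k" "3 \<le> k" and succ: "cm_successful k n Qs"
    and ii: "i \<in> {1..n}" "i' \<in> {1..n}"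
    and par: "(i = i' \<and> even n) \<or> (i \<noteq> i' \<and> odd n)"
    and big: "2*k*k + 4 \<le> n"
  shows "d_C (k-1) (n-1) \<le> card {t. t < length Qs \<and> (i \<in> Qs ! t \<or> i' \<in> Qs ! t)}"
proof (rule ccontr)
  define M where "M = {t. t < length Qs \<and> (i \<in> Qs ! t \<or> i' \<in> Qs ! t)}"
  assume "\<not> d_C (k-1) (n-1) \<le> card {t. t < length Qs \<and> (i \<in> Qs ! t \<or> i' \<in> Qs ! t)}"
  then have Md: "card M < d_C (k-1) (n-1)" unfolding M_def by simp
  have kk: "k \<le> k*k" by (rule le_square)
  have kn: "k \<le> n - 1" using kk big by linarith
  have dk: "d_C (k-1) (n-1) \<le> k" by (rule dC_le[OF k kn])
  have finM: "finite M" unfolding M_def by simp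
  have Q: "Qs ! t \<subseteq> {1..n}" "card (Qs ! t) = k" "finite (Qs ! t)" if "t < length Qs" for t
    using queries[OF succ that] by auto
  define e where "e t = (if i' \<in> Qs ! t then Qs ! t - {i'} else Qs ! t - {i})" for t
  define r where "r x = (if x = n then i' else x)" for x
  define E where "E = (\<lambda>t. r ` e t) ` M"
  have e_sub: "e t \<subseteq> {1..n} - {i'}" if "t \<in> M" for t
    using that Q[of t] unfolding M_def e_def by auto
  have e_card: "card (e t) = k - 1" if "t \<in> M" for t
  proof -
    have t: "t < length Qs" "i \<in> Qs ! t \<or> i' \<in> Qs ! t" using that unfolding M_def by auto
    show ?thesis
    proof (cases "i' \<in> Qs ! t")
      case True
      then show ?thesis unfolding e_def using Q[OF t(1)] by simp
    next
      case False
      then show ?thesis unfolding e_def using Q[OF t(1)] t(2) by simp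
    qed
  qed
  have inj_r: "inj_on r ({1..n} - {i'})"
    by (rule inj_onI) (auto simp: r_def split: if_splits)
  have r_sub: "r ` ({1..n} - {i'}) \<subseteq> {1..n-1}"
  proof
    fix y assume "y \<in> r ` ({1..n} - {i'})"
    then obtain x where x: "x \<in> {1..n} - {i'}" "y = r x" by blast
    show "y \<in> {1..n-1}"
    proof (cases "x = n")
      case True
      then have "i' \<noteq> n" using x by auto
      then show ?thesis using x True ii unfolding r_def by auto
    next
      case False
      then show ?thesis using x unfolding r_def by auto
    qed
  qed
  have E_edges: "\<forall>e'\<in>E. e' \<subseteq> {1..n-1} \<and> card e' = k - 1"
  proof
    fix e' assume "e' \<in> E"
    then obtain t where t: "t \<in> M" "e' = r ` e t" unfolding E_def by blast
    have "inj_on r (e t)" using inj_r e_sub[OF t(1)] by (rule inj_on_subset)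
    then have "card e' = k - 1" using t e_card[OF t(1)] by (simp add: card_image)
    moreover have "e' \<subseteq> {1..n-1}" using t e_sub[OF t(1)] r_sub by blast
    ultimately show "e' \<subseteq> {1..n-1} \<and> card e' = k - 1" by simp
  qed
  have "card E \<le> card M" unfolding E_def using finM by (rule card_image_le)
  then have "card E < d_C (k-1) (n-1)" using Md by simp
  then have "property_C (n-1) E" using E_edges dC_lower by blast
  then obtain c' where c': "\<forall>e'\<in>E. balanced_on c' e'" unfolding property_C_def by blast
  define c1 where "c1 x = c' (r x)" for x
  have bal1: "balanced_on c1 (e t)" if "t \<in> M" for t
  proof -
    have "inj_on r (e t)" using inj_r e_sub[OF that] by (rule inj_on_subset)
    moreover have "balanced_on c' (r ` e t)" using c' that unfolding E_def by blast
    ultimately show ?thesis unfolding c1_def using balanced_image by blast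
  qed
  define c2 where "c2 = (if c1 i then (\<lambda>x. \<not> c1 x) else c1)"
  have c2i: "\<not> c2 i" unfolding c2_def by simp
  have bal2: "balanced_on c2 (e t)" if "t \<in> M" for t
    using bal1[OF that] balanced_neg unfolding c2_def by simp
  obtain m where m: "k - 1 = 2*m" using k(1) by (metis odd_two_times_div_two_nat)
  have half2: "card {x\<in>e t. c2 x} = m" if "t \<in> M" for t
  proof -
    have "finite (e t)" using e_sub[OF that] finite_subset by blast
    then show ?thesis using bal_even[of "e t" c2 m] bal2[OF that] e_card[OF that] m by simp
  qed
  define U where "U = (\<Union>t\<in>M. e t) \<union> {i, i'}"
  define cu where "cu x = (if x = i \<or> x = i' then False else c2 x)" for x
  have cu_e: "\<forall>x\<in>e t. cu x = c2 x" if "t \<in> M" for t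
    using e_sub[OF that] c2i unfolding cu_def by auto
  have U_sub: "U \<subseteq> {1..n}" unfolding U_def using e_sub ii by blast
  then have finU: "finite U" using finite_subset by blast
  have "card (\<Union>t\<in>M. e t) \<le> (\<Sum>t\<in>M. card (e t))" by (rule card_UN_le[OF finM])
  also have "\<dots> = card M * (k - 1)" using e_card by simp
  also have "\<dots> \<le> (k-1) * (k-1)"
  proof -
    have "card M \<le> k - 1" using Md dk by linarith
    then show ?thesis by (rule mult_le_mono1)
  qed
  finally have "card (\<Union>t\<in>M. e t) \<le> (k-1)*(k-1)" .
  moreover have "card {i, i'} \<le> 2" by (cases "i = i'") auto
  moreover have "card U \<le> card (\<Union>t\<in>M. e t) + card {i, i'}" unfolding U_def by (rule card_Un_le)
  ultimately have cU1: "card U \<le> (k-1)*(k-1) + 2" by linarith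
  have "(k-1)*(k-1) + 2 \<le> k*k"
  proof -
    obtain j where j: "k = Suc j" using k(2) by (cases k) auto
    then have "1 \<le> j" using k(2) by simp
    then show ?thesis using j by (simp add: algebra_simps)
  qed
  then have cU: "card U \<le> k*k" using cU1 by linarith
  have cuU: "card {x\<in>U. cu x} \<le> card U" using finU by (intro card_mono) auto
  have nd: "2 * (n div 2) \<le> n" "n \<le> 2 * (n div 2) + 1" by auto
  have big2: "2*(k*k) + 4 \<le> n" using big by (simp add: mult.assoc)
  have "n div 2 \<le> card {x\<in>U. cu x} + (n - card U)" using cU big2 nd by linarith
  moreover have "card {x\<in>U. cu x} \<le> n div 2" using cuU cU big2 nd by linarith
  ultimately obtain c0 where c0: "\<forall>x\<in>U. c0 x = cu x" "tc n c0 = n div 2"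
    using extend[OF finU U_sub] by blast
  have c0ii: "\<not> c0 i" "\<not> c0 i'" using c0(1) unfolding U_def cu_def by auto
  have Qhalf: "card {x\<in>Qs ! t. c0 x} = (k-1) div 2" if "t < length Qs" "i \<in> Qs ! t \<or> i' \<in> Qs ! t" for t
  proof -
    have tM: "t \<in> M" unfolding M_def using that by simp
    have "e t \<subseteq> U" unfolding U_def using tM by blast
    then have "{x\<in>e t. c0 x} = {x\<in>e t. c2 x}" using c0(1) cu_e[OF tM] by auto
    moreover have "{x\<in>Qs ! t. c0 x} = {x\<in>e t. c0 x}" unfolding e_def using c0ii by auto
    ultimately show ?thesis using half2[OF tM] m by simp
  qed
  define d1 where "d1 = c0(i:=True)"
  define d2 where "d2 = c0(i':=True)"
  have cons1: "cm_consistent Qs c0 d1"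
  proof (rule consistent_by_nth)
    fix t assume t: "t < length Qs"
    show "cm_answer d1 (Qs ! t) = cm_answer c0 (Qs ! t)"
    proof (cases "i \<in> Qs ! t")
      case True
      then show ?thesis unfolding d1_def using flip_odd[of "Qs ! t" i c0 k] Q[OF t] c0ii Qhalf[OF t] k by simp
    next
      case False
      then show ?thesis unfolding d1_def by (intro answer_agree) auto
    qed
  qed
  have cons2: "cm_consistent Qs c0 d2"
  proof (rule consistent_by_nth)
    fix t assume t: "t < length Qs"
    show "cm_answer d2 (Qs ! t) = cm_answer c0 (Qs ! t)"
    proof (cases "i' \<in> Qs ! t")
      case True
      then show ?thesis unfolding d2_def using flip_odd[of "Qs ! t" i' c0 k] Q[OF t] c0ii Qhalf[OF t] k by simp
    next
      case False
      then show ?thesis unfolding d2_def by (intro answer_agree) auto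
    qed
  qed
  have tc1: "tc n d1 = Suc (n div 2)" unfolding d1_def using tc_up[of i n c0, OF ii(1) c0ii(1)] c0(2) by simp
  have tc2: "tc n d2 = Suc (n div 2)" unfolding d2_def using tc_up[of i' n c0, OF ii(2) c0ii(2)] c0(2) by simp
  show False
  proof (cases "even n")
    case True
    show False by (rule break1[OF succ _ cons1]) (use True c0(2) tc1 in auto)
  next
    case False
    then have ne: "i \<noteq> i'" using par by auto
    show False
    proof (rule break2[OF succ _, of c0 "{d1, d2}"])
      show "2 * tc n c0 < n" using c0(2) False by presburger
      show "\<forall>c\<in>{d1, d2}. cm_consistent Qs c0 c \<and> n < 2 * tc n c"
        using cons1 cons2 tc1 tc2 False by auto
      show "\<forall>x\<in>{1..n}. \<exists>c\<in>{d1, d2}. c x = c0 x"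
        unfolding d1_def d2_def using ne by auto
    qed
  qed
qed



lemma answer_same_cnt:
  assumes "finite Q" "card {y\<in>Q. c' y} = card {y\<in>Q. c y}"
  shows "cm_answer c' Q = cm_answer c Q"
  by (rule answer_eq_cnt) (use assms in \<open>auto intro: card_mono\<close>)

lemma flip_pair:
  assumes "finite Q" "card Q = k" "even k" "2 \<le> k" "x \<in> Q" "y \<in> Q" "x \<noteq> y" "\<not> c x" "\<not> c y"
    "card {z\<in>Q. c z} = k div 2 - 1"
  shows "cm_answer (c(x:=True, y:=True)) Q = cm_answer c Q"
proof (rule answer_eq_cnt[OF assms(1)])
  have 1: "card {z\<in>Q. (c(x:=True)) z} = Suc (card {z\<in>Q. c z})" by (rule cnt_up[of Q x c]) (use assms in auto)
  have 2: "card {z\<in>Q. (c(x:=True, y:=True)) z} = Suc (card {z\<in>Q. (c(x:=True)) z})"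
    by (rule cnt_up[of Q y "c(x:=True)"]) (use assms in auto)
  show "card {z\<in>Q. (c(x:=True, y:=True)) z} = card {z\<in>Q. c z} \<or>
    card {z\<in>Q. (c(x:=True, y:=True)) z} = card Q - card {z\<in>Q. c z}"
    using 1 2 assms(2,3,4,10) by auto
  show "card {z\<in>Q. c z} \<le> card Q" using assms(1) by (intro card_mono) auto
qed

lemma tc_up2:
  assumes "x \<in> {1..n}" "y \<in> {1..n}" "x \<noteq> y" "\<not> c x" "\<not> c y"
  shows "tc n (c(x:=True, y:=True)) = tc n c + 2"
proof -
  have "tc n (c(x:=True)) = Suc (tc n c)" by (rule tc_up[of x n c]) (use assms in auto)
  moreover have "tc n (c(x:=True, y:=True)) = Suc (tc n (c(x:=True)))"
    by (rule tc_up[of y n "c(x:=True)"]) (use assms in auto)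
  ultimately show ?thesis by simp
qed

lemma ext_half:
  assumes "finite U" "U \<subseteq> {1..n}" "card U \<le> 2*k" "4*k+4 \<le> n"
  shows "\<exists>c0. (\<forall>x\<in>U. c0 x = cu x) \<and> tc n c0 = n div 2"
proof -
  have cuU: "card {x\<in>U. cu x} \<le> card U" using assms(1) by (intro card_mono) auto
  have nd: "2 * (n div 2) \<le> n" "n \<le> 2 * (n div 2) + 1" by auto
  show ?thesis by (rule extend[OF assms(1,2)]) (use cuU nd assms(3,4) in linarith)+
qed

lemma E1:
  assumes succ: "cm_successful k n Qs" "even n" "b \<in> {1..n}" "deg Qs b = 0" "4*k+4 \<le> n" "2 \<le> k"
  shows False
proof -
  obtain c0 where c0: "\<forall>x\<in>{b}. c0 x = False" "tc n c0 = n div 2"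
    using ext_half[of "{b}" n k "\<lambda>_. False"] assms by auto
  define d1 where "d1 = c0(b:=True)"
  have "cm_consistent Qs c0 d1"
  proof (rule consistent_by_nth)
    fix t assume "t < length Qs"
    then have "b \<notin> Qs ! t" using deg0 assms(4) by blast
    then show "cm_answer d1 (Qs ! t) = cm_answer c0 (Qs ! t)" unfolding d1_def by (intro answer_agree) auto
  qed
  moreover have "tc n d1 = Suc (n div 2)" unfolding d1_def using tc_up[of b n c0] c0 assms(3) by simp
  ultimately show False using break1[OF succ(1), of c0 d1] c0(2) assms(2) by auto
qed

lemma subset_h:
  assumes "finite R" "h \<le> card R"
  obtains S where "S \<subseteq> R" "card S = h"
  using obtain_subset_with_card_n[OF assms(2)] by blast

lemma E2:
  assumes succ: "cm_successful k n Qs" "even n" "even k" "2 \<le> k" "4*k+4 \<le> n"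
    and t: "t < length Qs" "i \<in> Qs ! t" "i' \<in> Qs ! t" "i \<noteq> i'" "deg Qs i = 1" "deg Qs i' = 1"
  shows False
proof -
  note Q = queries[OF succ(1) t(1)]
  have "card (Qs ! t - {i, i'}) = k - 2" using Q t by (simp add: card_Diff_subset)
  moreover have "k div 2 - 1 \<le> k - 2" using assms(3,4) by presburger
  ultimately have "k div 2 - 1 \<le> card (Qs ! t - {i, i'})" by simp
  then obtain S where S: "S \<subseteq> Qs ! t - {i, i'}" "card S = k div 2 - 1"
    using subset_h[of "Qs ! t - {i,i'}" "k div 2 - 1"] Q(3) by auto
  obtain c0 where c0: "\<forall>x\<in>Qs ! t. c0 x = (x \<in> S)" "tc n c0 = n div 2"
    using ext_half[of "Qs ! t" n k "\<lambda>x. x \<in> S"] Q assms(5) by auto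
  have c0ii: "\<not> c0 i" "\<not> c0 i'" using c0(1) S(1) t by auto
  have cntQ: "card {x\<in>Qs ! t. c0 x} = k div 2 - 1"
  proof -
    have "{x\<in>Qs ! t. c0 x} = S" using c0(1) S(1) by auto
    then show ?thesis using S(2) by simp
  qed
  define d1 where "d1 = c0(i:=True, i':=True)"
  have "cm_consistent Qs c0 d1"
  proof (rule consistent_by_nth)
    fix t' assume t': "t' < length Qs"
    show "cm_answer d1 (Qs ! t') = cm_answer c0 (Qs ! t')"
    proof (cases "i \<in> Qs ! t' \<or> i' \<in> Qs ! t'")
      case True
      then have "t' = t" using deg1[OF t(5) t(1) t(2) t'] deg1[OF t(6) t(1) t(3) t'] by blast
      then show ?thesis unfolding d1_def using flip_pair[of "Qs ! t" k i i' c0] Q t c0ii cntQ assms(3,4) by simp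
    next
      case False
      then show ?thesis unfolding d1_def by (intro answer_agree) auto
    qed
  qed
  moreover have "tc n d1 = n div 2 + 2"
  proof -
    have "i \<in> {1..n}" "i' \<in> {1..n}" using Q(1) t by auto
    then show ?thesis unfolding d1_def using tc_up2[of i n i' c0] c0ii c0(2) t by simp
  qed
  ultimately show False using break1[OF succ(1), of c0 d1] c0(2) assms(2) by auto
qed



lemma odd_half: "odd n \<Longrightarrow> 2 * (n div 2) < n" "odd n \<Longrightarrow> n < 2 * Suc (n div 2)" "odd n \<Longrightarrow> n < 2 * (n div 2 + 2)"
  by presburger+

lemma E3:
  assumes succ: "cm_successful k n Qs" "odd n" "b \<in> {1..n}" "b' \<in> {1..n}" "b \<noteq> b'"
    "deg Qs b = 0" "deg Qs b' = 0" "4*k+4 \<le> n" "2 \<le> k"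
  shows False
proof -
  have "card {b, b'} \<le> 2*k" using assms(9) by (cases "b = b'") auto
  then obtain c0 where c0: "\<forall>x\<in>{b,b'}. c0 x = False" "tc n c0 = n div 2"
    using ext_half[of "{b,b'}" n k "\<lambda>_. False"] assms by auto
  define d1 where "d1 = c0(b:=True)"
  define d2 where "d2 = c0(b':=True)"
  have "cm_consistent Qs c0 d1"
  proof (rule consistent_by_nth)
    fix t assume "t < length Qs"
    then have "b \<notin> Qs ! t" using deg0 assms(6) by blast
    then show "cm_answer d1 (Qs ! t) = cm_answer c0 (Qs ! t)" unfolding d1_def by (intro answer_agree) auto
  qed
  moreover have "cm_consistent Qs c0 d2"
  proof (rule consistent_by_nth)
    fix t assume "t < length Qs"
    then have "b' \<notin> Qs ! t" using deg0 assms(7) by blast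
    then show "cm_answer d2 (Qs ! t) = cm_answer c0 (Qs ! t)" unfolding d2_def by (intro answer_agree) auto
  qed
  moreover have "tc n d1 = Suc (n div 2)" unfolding d1_def using tc_up[of b n c0] c0 assms(3) by simp
  moreover have "tc n d2 = Suc (n div 2)" unfolding d2_def using tc_up[of b' n c0] c0 assms(4) by simp
  ultimately have "\<forall>c\<in>{d1, d2}. cm_consistent Qs c0 c \<and> n < 2 * tc n c"
    using odd_half[OF assms(2)] by auto
  moreover have "\<forall>x\<in>{1..n}. \<exists>c\<in>{d1, d2}. c x = c0 x"
    unfolding d1_def d2_def using assms(5) by auto
  moreover have "2 * tc n c0 < n" using c0(2) odd_half[OF assms(2)] by simp
  ultimately show False using break2[OF succ(1), of c0 "{d1, d2}"] by blast
qed

lemma E4: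
  assumes succ: "cm_successful k n Qs" "odd n" "even k" "2 \<le> k" "4*k+4 \<le> n"
    and b: "b \<in> {1..n}" "deg Qs b = 0"
    and t: "t < length Qs" "i \<in> Qs ! t" "i' \<in> Qs ! t" "i \<noteq> i'" "deg Qs i = 1" "deg Qs i' = 1"
  shows False
proof -
  note Q = queries[OF succ(1) t(1)]
  have bQ: "b \<notin> Qs ! t" using deg0 b(2) t(1) by blast
  have "card (Qs ! t - {i, i'}) = k - 2" using Q t by (simp add: card_Diff_subset)
  moreover have "k div 2 - 1 \<le> k - 2" using assms(3,4) by presburger
  ultimately have "k div 2 - 1 \<le> card (Qs ! t - {i, i'})" by simp
  then obtain S where S: "S \<subseteq> Qs ! t - {i, i'}" "card S = k div 2 - 1"
    using subset_h[of "Qs ! t - {i,i'}" "k div 2 - 1"] Q(3) by auto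
  have "card (insert b (Qs ! t)) \<le> 2*k" using Q(2,3) assms(4) by (simp add: card_insert_if)
  then obtain c0 where c0: "\<forall>x\<in>insert b (Qs ! t). c0 x = (x \<in> S)" "tc n c0 = n div 2"
    using ext_half[of "insert b (Qs ! t)" n k "\<lambda>x. x \<in> S"] Q b assms(5) by auto
  have c0ii: "\<not> c0 i" "\<not> c0 i'" "\<not> c0 b" using c0(1) S(1) t bQ by auto
  have cntQ: "card {x\<in>Qs ! t. c0 x} = k div 2 - 1"
  proof -
    have "{x\<in>Qs ! t. c0 x} = S" using c0(1) S(1) by auto
    then show ?thesis using S(2) by simp
  qed
  define d1 where "d1 = c0(b:=True)"
  define d2 where "d2 = c0(i:=True, i':=True)"
  have cons1: "cm_consistent Qs c0 d1"
  proof (rule consistent_by_nth)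
    fix t assume "t < length Qs"
    then have "b \<notin> Qs ! t" using deg0 b(2) by blast
    then show "cm_answer d1 (Qs ! t) = cm_answer c0 (Qs ! t)" unfolding d1_def by (intro answer_agree) auto
  qed
  have cons2: "cm_consistent Qs c0 d2"
  proof (rule consistent_by_nth)
    fix t' assume t': "t' < length Qs"
    show "cm_answer d2 (Qs ! t') = cm_answer c0 (Qs ! t')"
    proof (cases "i \<in> Qs ! t' \<or> i' \<in> Qs ! t'")
      case True
      then have "t' = t" using deg1[OF t(5) t(1) t(2) t'] deg1[OF t(6) t(1) t(3) t'] by blast
      then show ?thesis unfolding d2_def using flip_pair[of "Qs ! t" k i i' c0] Q t c0ii cntQ assms(3,4) by simp
    next
      case False
      then show ?thesis unfolding d2_def by (intro answer_agree) auto
    qed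
  qed
  have iin: "i \<in> {1..n}" "i' \<in> {1..n}" using Q(1) t by auto
  have tc1: "tc n d1 = Suc (n div 2)" unfolding d1_def using tc_up[of b n c0] c0 c0ii b by simp
  have tc2: "tc n d2 = n div 2 + 2" unfolding d2_def using tc_up2[of i n i' c0] c0ii c0(2) t iin by simp
  have bi: "b \<noteq> i" "b \<noteq> i'" using bQ t by auto
  show False
  proof (rule break2[OF succ(1), of c0 "{d1, d2}"])
    show "2 * tc n c0 < n" using c0(2) odd_half[OF assms(2)] by simp
    show "\<forall>c\<in>{d1, d2}. cm_consistent Qs c0 c \<and> n < 2 * tc n c"
      using cons1 cons2 tc1 tc2 odd_half[OF assms(2)] by auto
    show "\<forall>x\<in>{1..n}. \<exists>c\<in>{d1, d2}. c x = c0 x"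
      unfolding d1_def d2_def using bi by auto
  qed
qed

lemma E5:
  assumes succ: "cm_successful k n Qs" "odd n" "even k" "2 \<le> k" "4*k+4 \<le> n"
    and t: "t < length Qs" "i \<in> Qs ! t" "i' \<in> Qs ! t" "i'' \<in> Qs ! t" "i \<noteq> i'" "i \<noteq> i''" "i' \<noteq> i''"
      "deg Qs i = 1" "deg Qs i' = 1" "deg Qs i'' = 1"
  shows False
proof -
  note Q = queries[OF succ(1) t(1)]
  have "card {i, i', i''} \<le> k" using Q t by (metis card_mono empty_subsetI insert_subset)
  then have k4: "4 \<le> k" using t(5-7) assms(3) by (auto simp: card_insert_if split: if_splits)
  have "card (Qs ! t - {i, i', i''}) = k - 3" using Q t by (simp add: card_Diff_subset)
  moreover have "k div 2 - 1 \<le> k - 3" using k4 by presburger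
  ultimately have "k div 2 - 1 \<le> card (Qs ! t - {i, i', i''})" by simp
  then obtain S where S: "S \<subseteq> Qs ! t - {i, i', i''}" "card S = k div 2 - 1"
    using subset_h[of "Qs ! t - {i,i',i''}" "k div 2 - 1"] Q(3) by auto
  obtain c0 where c0: "\<forall>x\<in>Qs ! t. c0 x = (x \<in> S)" "tc n c0 = n div 2"
    using ext_half[of "Qs ! t" n k "\<lambda>x. x \<in> S"] Q assms(5) by auto
  have c0ii: "\<not> c0 i" "\<not> c0 i'" "\<not> c0 i''" using c0(1) S(1) t by auto
  have cntQ: "card {x\<in>Qs ! t. c0 x} = k div 2 - 1"
  proof -
    have "{x\<in>Qs ! t. c0 x} = S" using c0(1) S(1) by auto
    then show ?thesis using S(2) by simp
  qed
  have iin: "i \<in> {1..n}" "i' \<in> {1..n}" "i'' \<in> {1..n}" using Q(1) t by auto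
  have gen: "cm_consistent Qs c0 (c0(x:=True, y:=True)) \<and> tc n (c0(x:=True, y:=True)) = n div 2 + 2"
    if xy: "x \<in> {i, i', i''}" "y \<in> {i, i', i''}" "x \<noteq> y" for x y
  proof
    have xy': "x \<in> Qs ! t" "y \<in> Qs ! t" "deg Qs x = 1" "deg Qs y = 1" "\<not> c0 x" "\<not> c0 y"
      "x \<in> {1..n}" "y \<in> {1..n}"
      using xy t c0ii iin by auto
    show "cm_consistent Qs c0 (c0(x:=True, y:=True))"
    proof (rule consistent_by_nth)
      fix t' assume t': "t' < length Qs"
      show "cm_answer (c0(x:=True, y:=True)) (Qs ! t') = cm_answer c0 (Qs ! t')"
      proof (cases "x \<in> Qs ! t' \<or> y \<in> Qs ! t'")
        case True
        then have "t' = t" using deg1[OF xy'(3) t(1) xy'(1) t'] deg1[OF xy'(4) t(1) xy'(2) t'] by blast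
        then show ?thesis using flip_pair[of "Qs ! t" k x y c0] Q xy' xy(3) cntQ assms(3,4) by simp
      next
        case False
        then show ?thesis by (intro answer_agree) auto
      qed
    qed
    show "tc n (c0(x:=True, y:=True)) = n div 2 + 2" using tc_up2[of x n y c0] xy' xy(3) c0(2) by simp
  qed
  show False
  proof (rule break2[OF succ(1), of c0 "{c0(i:=True, i':=True), c0(i':=True, i'':=True), c0(i:=True, i'':=True)}"])
    show "2 * tc n c0 < n" using c0(2) odd_half[OF assms(2)] by simp
    show "\<forall>c\<in>{c0(i:=True, i':=True), c0(i':=True, i'':=True), c0(i:=True, i'':=True)}.
        cm_consistent Qs c0 c \<and> n < 2 * tc n c"
      using gen[of i i'] gen[of i' i''] gen[of i i''] t(5-7) odd_half[OF assms(2)] by auto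
    show "\<forall>x\<in>{1..n}. \<exists>c\<in>{c0(i:=True, i':=True), c0(i':=True, i'':=True), c0(i:=True, i'':=True)}. c x = c0 x"
      using t(5-7) by auto
  qed
qed



lemma E6:
  assumes succ: "cm_successful k n Qs" "odd n" "even k" "2 \<le> k" "4*k+4 \<le> n"
    and t: "t < length Qs" "i \<in> Qs ! t" "i' \<in> Qs ! t" "i \<noteq> i'" "deg Qs i = 1" "deg Qs i' = 1"
    and s: "s < length Qs" "j \<in> Qs ! s" "j' \<in> Qs ! s" "j \<noteq> j'" "deg Qs j = 1" "deg Qs j' = 1"
    and ts: "t \<noteq> s"
  shows False
proof -
  note Q = queries[OF succ(1) t(1)]
  note Q' = queries[OF succ(1) s(1)]
  have ni: "i \<notin> Qs ! s" "i' \<notin> Qs ! s" using deg1[OF t(5) t(1) t(2) s(1)] deg1[OF t(6) t(1) t(3) s(1)] ts by auto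
  have nj: "j \<notin> Qs ! t" "j' \<notin> Qs ! t" using deg1[OF s(5) s(1) s(2) t(1)] deg1[OF s(6) s(1) s(3) t(1)] ts by auto
  define h where "h = k div 2 - 1"
  have kh: "k - 2 = 2*h" unfolding h_def using assms(3,4) by presburger
  define R where "R = Qs ! t - {i, i'}"
  define R' where "R' = Qs ! s - {j, j'}"
  have cR: "card R = 2*h" unfolding R_def using Q t kh by (simp add: card_Diff_subset)
  have cR': "card R' = 2*h" unfolding R'_def using Q' s kh by (simp add: card_Diff_subset)
  obtain S where S: "S \<subseteq> R \<union> R'" "card (S \<inter> R) = h" "card (S \<inter> R') = h"
    using two_halves[of R R' h] cR cR' Q(3) Q'(3) unfolding R_def R'_def by auto
  define U where "U = Qs ! t \<union> Qs ! s"
  have U: "finite U" "U \<subseteq> {1..n}" "card U \<le> 2*k" unfolding U_def using Q Q'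
    by (auto intro: order_trans[OF card_Un_le])
  obtain c0 where c0: "\<forall>x\<in>U. c0 x = (x \<in> S)" "tc n c0 = n div 2"
    using ext_half[OF U, of "\<lambda>x. x \<in> S"] assms(5) by auto
  have SR: "S \<inter> Qs ! t = S \<inter> R" using S(1) ni nj unfolding R_def R'_def by blast
  have SR': "S \<inter> Qs ! s = S \<inter> R'" using S(1) ni nj unfolding R_def R'_def by blast
  have cnt1: "card {x\<in>Qs ! t. c0 x} = h"
  proof -
    have "{x\<in>Qs ! t. c0 x} = S \<inter> Qs ! t" using c0(1) unfolding U_def by auto
    then show ?thesis using SR S(2) by simp
  qed
  have cnt2: "card {x\<in>Qs ! s. c0 x} = h"
  proof -
    have "{x\<in>Qs ! s. c0 x} = S \<inter> Qs ! s" using c0(1) unfolding U_def by auto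
    then show ?thesis using SR' S(3) by simp
  qed
  have c0ii: "\<not> c0 i" "\<not> c0 i'" "\<not> c0 j" "\<not> c0 j'"
    using c0(1) S(1) t s ni nj unfolding U_def R_def R'_def by auto
  have gen: "cm_consistent Qs c0 (c0(x:=True, y:=True)) \<and> tc n (c0(x:=True, y:=True)) = n div 2 + 2"
    if xy: "r < length Qs" "x \<in> Qs ! r" "y \<in> Qs ! r" "x \<noteq> y" "deg Qs x = 1" "deg Qs y = 1"
       "\<not> c0 x" "\<not> c0 y" "card {x\<in>Qs ! r. c0 x} = h" for x y r
  proof
    note Qr = queries[OF succ(1) xy(1)]
    show "cm_consistent Qs c0 (c0(x:=True, y:=True))"
    proof (rule consistent_by_nth)
      fix t' assume t': "t' < length Qs"
      show "cm_answer (c0(x:=True, y:=True)) (Qs ! t') = cm_answer c0 (Qs ! t')"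
      proof (cases "x \<in> Qs ! t' \<or> y \<in> Qs ! t'")
        case True
        then have "t' = r" using deg1[OF xy(5) xy(1) xy(2) t'] deg1[OF xy(6) xy(1) xy(3) t'] by blast
        then show ?thesis using flip_pair[of "Qs ! r" k x y c0] Qr xy assms(3,4) unfolding h_def by simp
      next
        case False
        then show ?thesis by (intro answer_agree) auto
      qed
    qed
    have "x \<in> {1..n}" "y \<in> {1..n}" using Qr xy by auto
    then show "tc n (c0(x:=True, y:=True)) = n div 2 + 2" using tc_up2[of x n y c0] xy c0(2) by simp
  qed
  note g1 = gen[OF t(1-6) c0ii(1,2) cnt1]
  note g2 = gen[OF s(1-6) c0ii(3,4) cnt2]
  have dis: "i \<noteq> j" "i \<noteq> j'" "i' \<noteq> j" "i' \<noteq> j'" using ni s by auto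
  show False
  proof (rule break2[OF succ(1), of c0 "{c0(i:=True, i':=True), c0(j:=True, j':=True)}"])
    show "2 * tc n c0 < n" using c0(2) odd_half[OF assms(2)] by simp
    show "\<forall>c\<in>{c0(i:=True, i':=True), c0(j:=True, j':=True)}. cm_consistent Qs c0 c \<and> n < 2 * tc n c"
      using g1 g2 odd_half[OF assms(2)] by auto
    show "\<forall>x\<in>{1..n}. \<exists>c\<in>{c0(i:=True, i':=True), c0(j:=True, j':=True)}. c x = c0 x"
      using dis by auto
  qed
qed

lemma E7:
  assumes succ: "cm_successful k n Qs" "odd n" "2 \<le> k" "4*k+4 \<le> n"
    and b: "b \<in> {1..n}" "deg Qs b = 0"
    and t: "t1 < length Qs" "t2 < length Qs" "t1 \<noteq> t2" "x \<in> Qs ! t1" "x \<in> Qs ! t2" "deg Qs x = 2"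
      "i \<in> Qs ! t1" "deg Qs i = 1" "j \<in> Qs ! t2" "deg Qs j = 1"
  shows False
proof -
  note Q1 = queries[OF succ(1) t(1)]
  note Q2 = queries[OF succ(1) t(2)]
  have nb: "b \<notin> Qs ! t1" "b \<notin> Qs ! t2" using deg0 b(2) t(1,2) by blast+
  have jn: "j \<notin> Qs ! t1" using deg1[OF t(10) t(2) t(9) t(1)] t(3) by auto
  have in': "i \<notin> Qs ! t2" using deg1[OF t(8) t(1) t(7) t(2)] t(3) by auto
  have xi: "x \<noteq> i" "x \<noteq> j" using t(6,8,10) by auto
  have ij: "i \<noteq> j" using jn t(7) by auto
  have bne: "b \<noteq> i" "b \<noteq> j" "b \<noteq> x" using nb t by auto
  have iin: "i \<in> {1..n}" "j \<in> {1..n}" "x \<in> {1..n}" using Q1 Q2 t by auto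
  define U where "U = {b, i, j, x}"
  have U: "finite U" "U \<subseteq> {1..n}" "card U \<le> 2*k" unfolding U_def using iin b assms(3)
    by (auto intro: order_trans[OF card_insert_le_m1] simp: card_insert_if)
  obtain c0 where c0: "\<forall>y\<in>U. c0 y = (y = x)" "tc n c0 = n div 2"
    using ext_half[OF U, of "\<lambda>y. y = x"] assms(4) by auto
  have cv: "\<not> c0 b" "\<not> c0 i" "\<not> c0 j" "c0 x" using c0(1) xi bne unfolding U_def by auto
  define d1 where "d1 = c0(b:=True)"
  define d2 where "d2 = c0(i:=True, j:=True, x:=False)"
  have cons1: "cm_consistent Qs c0 d1"
  proof (rule consistent_by_nth)
    fix t assume "t < length Qs"
    then have "b \<notin> Qs ! t" using deg0 b(2) by blast
    then show "cm_answer d1 (Qs ! t) = cm_answer c0 (Qs ! t)" unfolding d1_def by (intro answer_agree) auto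
  qed
  have flip3: "card {y\<in>Q. d2 y} = card {y\<in>Q. c0 y}"
    if "finite Q" "x \<in> Q" "i \<in> Q" "j \<notin> Q" for Q
  proof -
    have a: "card {y\<in>Q. (c0(i:=True)) y} = Suc (card {y\<in>Q. c0 y})"
      by (rule cnt_up[of Q i c0]) (use that cv in auto)
    have b: "{y\<in>Q. (c0(i:=True, j:=True)) y} = {y\<in>Q. (c0(i:=True)) y}"
      by (rule cnt_out[of j Q]) (use that in auto)
    have c: "Suc (card {y\<in>Q. (c0(i:=True, j:=True, x:=False)) y}) = card {y\<in>Q. (c0(i:=True, j:=True)) y}"
      by (rule cnt_down[of Q x "c0(i:=True, j:=True)"]) (use that cv xi in auto)
    show ?thesis using a b c unfolding d2_def by simp
  qed
  have flip3': "card {y\<in>Q. d2 y} = card {y\<in>Q. c0 y}"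
    if "finite Q" "x \<in> Q" "j \<in> Q" "i \<notin> Q" for Q
  proof -
    have "d2 = c0(j:=True, i:=True, x:=False)" unfolding d2_def using ij by (auto simp: fun_eq_iff)
    have a: "card {y\<in>Q. (c0(j:=True)) y} = Suc (card {y\<in>Q. c0 y})"
      by (rule cnt_up[of Q j c0]) (use that cv in auto)
    have b: "{y\<in>Q. (c0(j:=True, i:=True)) y} = {y\<in>Q. (c0(j:=True)) y}"
      by (rule cnt_out[of i Q]) (use that in auto)
    have c: "Suc (card {y\<in>Q. (c0(j:=True, i:=True, x:=False)) y}) = card {y\<in>Q. (c0(j:=True, i:=True)) y}"
      by (rule cnt_down[of Q x "c0(j:=True, i:=True)"]) (use that cv xi in auto)
    show ?thesis using a b c \<open>d2 = c0(j:=True, i:=True, x:=False)\<close> by simp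
  qed
  have cons2: "cm_consistent Qs c0 d2"
  proof (rule consistent_by_nth)
    fix t assume tt: "t < length Qs"
    note Qt = queries[OF succ(1) tt]
    show "cm_answer d2 (Qs ! t) = cm_answer c0 (Qs ! t)"
    proof (cases "i \<in> Qs ! t \<or> j \<in> Qs ! t \<or> x \<in> Qs ! t")
      case True
      then have "t = t1 \<or> t = t2"
        using deg1[OF t(8) t(1) t(7) tt] deg1[OF t(10) t(2) t(9) tt] deg2[OF t(6) t(1) t(4) t(2) t(5) t(3) tt]
        by blast
      then show ?thesis
      proof
        assume "t = t1"
        then show ?thesis using flip3[of "Qs ! t"] Qt t jn by (intro answer_same_cnt) auto
      next
        assume "t = t2"
        then show ?thesis using flip3'[of "Qs ! t"] Qt t in' by (intro answer_same_cnt) auto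
      qed
    next
      case False
      then show ?thesis unfolding d2_def by (intro answer_agree) auto
    qed
  qed
  have tc1: "tc n d1 = Suc (n div 2)" unfolding d1_def using tc_up[of b n c0] c0 cv b by simp
  have tc2: "tc n d2 = Suc (n div 2)"
  proof -
    have "card {y\<in>{1..n}. d2 y} = card {y\<in>{1..n}. c0 y} + 1"
    proof -
      have a: "card {y\<in>{1..n}. (c0(i:=True)) y} = Suc (card {y\<in>{1..n}. c0 y})"
        by (rule cnt_up[of "{1..n}" i c0]) (use iin cv in auto)
      have b: "card {y\<in>{1..n}. (c0(i:=True, j:=True)) y} = Suc (card {y\<in>{1..n}. (c0(i:=True)) y})"
        by (rule cnt_up[of "{1..n}" j "c0(i:=True)"]) (use iin cv ij in auto)
      have c: "Suc (card {y\<in>{1..n}. (c0(i:=True, j:=True, x:=False)) y}) = card {y\<in>{1..n}. (c0(i:=True, j:=True)) y}"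
        by (rule cnt_down[of "{1..n}" x "c0(i:=True, j:=True)"]) (use iin cv xi in auto)
      show ?thesis using a b c unfolding d2_def by simp
    qed
    then show ?thesis using c0(2) unfolding tc_def by simp
  qed
  show False
  proof (rule break2[OF succ(1), of c0 "{d1, d2}"])
    show "2 * tc n c0 < n" using c0(2) odd_half[OF assms(2)] by simp
    show "\<forall>c\<in>{d1, d2}. cm_consistent Qs c0 c \<and> n < 2 * tc n c"
      using cons1 cons2 tc1 tc2 odd_half[OF assms(2)] by auto
    show "\<forall>y\<in>{1..n}. \<exists>c\<in>{d1, d2}. c y = c0 y"
      unfolding d1_def d2_def using bne by auto
  qed
qed



lemma two_elems:
  assumes "finite A" "\<not> card A \<le> 1"
  obtains x y where "x \<in> A" "y \<in> A" "x \<noteq> y"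
  using assms card_le_Suc0_iff_eq[OF assms(1)] by auto

lemma three_elems:
  assumes "finite A" "3 \<le> card A"
  obtains x y z where "x \<in> A" "y \<in> A" "z \<in> A" "x \<noteq> y" "y \<noteq> z" "x \<noteq> z"
proof -
  obtain S where "S \<subseteq> A" "card S = 3" using subset_h[OF assms] by blast
  then show ?thesis using that card_3_iff[of S] by auto
qed

lemma sum_all:
  assumes "cm_successful k n Qs"
  shows "(\<Sum>i\<in>{1..n}. deg Qs i) = length Qs * k"
proof -
  have "(\<Sum>i\<in>{1..n}. deg Qs i) = (\<Sum>t<length Qs. card (Qs ! t \<inter> {1..n}))" by (rule sum_deg) simp
  also have "\<dots> = (\<Sum>t<length Qs. k)"
  proof (rule sum.cong)
    fix t assume "t \<in> {..<length Qs}"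
    then have "t < length Qs" by simp
    note Q = queries[OF assms this]
    then have "Qs ! t \<inter> {1..n} = Qs ! t" by blast
    then show "card (Qs ! t \<inter> {1..n}) = k" using Q by simp
  qed simp
  finally show ?thesis by simp
qed

lemma card_D1:
  assumes "finite D" "\<forall>i\<in>D. deg Qs i = 1"
  shows "card D = (\<Sum>t<length Qs. card (Qs ! t \<inter> D))"
proof -
  have "(\<Sum>i\<in>D. deg Qs i) = card D" using assms by simp
  then show ?thesis using sum_deg[OF assms(1), of Qs] by simp
qed

lemma split_sum:
  assumes "D1 \<subseteq> A" "finite A" "\<forall>i\<in>D1. deg Qs i = 1" "\<forall>i\<in>A - D1. 2 \<le> deg Qs i"
  shows "card D1 + 2 * card (A - D1) \<le> (\<Sum>i\<in>A. deg Qs i)"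
proof -
  have "(\<Sum>i\<in>A. deg Qs i) = (\<Sum>i\<in>A - D1. deg Qs i) + (\<Sum>i\<in>D1. deg Qs i)"
    by (rule sum.subset_diff[OF assms(1,2)])
  moreover have "(\<Sum>i\<in>D1. deg Qs i) = card D1" using assms(3) by simp
  moreover have "(\<Sum>i\<in>A - D1. 2) \<le> (\<Sum>i\<in>A - D1. deg Qs i)" by (rule sum_mono) (use assms(4) in auto)
  ultimately show ?thesis by (simp add: mult.commute)
qed

lemma evk_evn:
  assumes "even k" "2 \<le> k" and succ: "cm_successful k n Qs" and "even n" "4*k+4 \<le> n"
  shows "2*n \<le> length Qs * (k+1)"
proof -
  define D1 where "D1 = {i\<in>{1..n}. deg Qs i = 1}"
  have D1: "D1 \<subseteq> {1..n}" "finite D1" "\<forall>i\<in>D1. deg Qs i = 1" unfolding D1_def by auto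
  have p1: "card (Qs ! t \<inter> D1) \<le> 1" if t: "t < length Qs" for t
  proof (rule ccontr)
    assume "\<not> card (Qs ! t \<inter> D1) \<le> 1"
    then obtain x y where "x \<in> Qs ! t \<inter> D1" "y \<in> Qs ! t \<inter> D1" "x \<noteq> y"
      using two_elems[of "Qs ! t \<inter> D1"] D1(2) by blast
    then show False using E2[OF succ assms(4,1,2,5) t, of x y] D1(3) by auto
  qed
  have "card D1 = (\<Sum>t<length Qs. card (Qs ! t \<inter> D1))" by (rule card_D1[OF D1(2,3)])
  also have "\<dots> \<le> (\<Sum>t<length Qs. 1)" by (rule sum_mono) (use p1 in auto)
  finally have cD1: "card D1 \<le> length Qs" by simp
  have ge2: "\<forall>i\<in>{1..n} - D1. 2 \<le> deg Qs i"
  proof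
    fix i assume i: "i \<in> {1..n} - D1"
    have "deg Qs i \<noteq> 0" using E1[OF succ assms(4), of i] i assms(2,5) by auto
    moreover have "deg Qs i \<noteq> 1" using i unfolding D1_def by auto
    ultimately show "2 \<le> deg Qs i" by simp
  qed
  have "card D1 + 2 * card ({1..n} - D1) \<le> (\<Sum>i\<in>{1..n}. deg Qs i)"
    by (rule split_sum[OF D1(1) _ D1(3) ge2]) simp
  moreover have "card ({1..n} - D1) = n - card D1" using D1 by (simp add: card_Diff_subset)
  moreover have "card D1 \<le> n" using D1(1) by (metis card_atLeastAtMost card_mono finite_atLeastAtMost diff_Suc_1)
  ultimately have "2*n \<le> (\<Sum>i\<in>{1..n}. deg Qs i) + card D1" by linarith
  then show ?thesis using sum_all[OF succ] cD1 by (simp add: algebra_simps)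
qed

lemma sum_le_q1:
  assumes "\<forall>t<q. f t \<le> (2::nat)" "\<forall>t s. t < q \<longrightarrow> s < q \<longrightarrow> t \<noteq> s \<longrightarrow> f t \<le> 1 \<or> f s \<le> 1"
  shows "(\<Sum>t<q. f t) \<le> q + 1"
proof (cases "\<forall>t<q. f t \<le> 1")
  case True
  then have "(\<Sum>t<q. f t) \<le> (\<Sum>t<q. 1)" by (intro sum_mono) auto
  then show ?thesis by simp
next
  case False
  then obtain t0 where t0: "t0 < q" "\<not> f t0 \<le> 1" by auto
  have "(\<Sum>t<q. f t) = f t0 + (\<Sum>t\<in>{..<q} - {t0}. f t)" by (rule sum.remove) (use t0 in auto)
  moreover have "(\<Sum>t\<in>{..<q} - {t0}. f t) \<le> (\<Sum>t\<in>{..<q} - {t0}. 1)"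
    by (rule sum_mono) (use assms(2) t0 in auto)
  moreover have "(\<Sum>t\<in>{..<q} - {t0}. (1::nat)) = q - 1" using t0 by simp
  moreover have "f t0 \<le> 2" using assms(1) t0 by simp
  ultimately show ?thesis using t0 by linarith
qed

lemma sum_all_one:
  assumes "\<forall>t<q. f t \<le> (1::nat)" "(\<Sum>t<q. f t) = q" "t0 < q"
  shows "f t0 = 1"
proof (rule ccontr)
  assume "f t0 \<noteq> 1"
  then have z: "f t0 = 0" using assms(1,3) by fastforce
  have "(\<Sum>t<q. f t) = f t0 + (\<Sum>t\<in>{..<q} - {t0}. f t)" by (rule sum.remove) (use assms(3) in auto)
  moreover have "(\<Sum>t\<in>{..<q} - {t0}. f t) \<le> (\<Sum>t\<in>{..<q} - {t0}. 1)"
    by (rule sum_mono) (use assms(1) in auto)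
  moreover have "card ({..<q} - {t0}) = q - 1" using assms(3) by simp
  ultimately show False using z assms(2,3) by simp
qed



lemma evk_odd:
  assumes "even k" "2 \<le> k" and succ: "cm_successful k n Qs" and "odd n" "4*k+4 \<le> n"
  shows "2*n \<le> length Qs * (k+1) + 1"
proof (cases "n - 1 \<le> length Qs")
  case True
  then have "3 * (n - 1) \<le> length Qs * 3" by simp
  moreover have "length Qs * 3 \<le> length Qs * (k+1)" using assms(2) by (intro mult_le_mono2) simp
  ultimately show ?thesis using assms(5) by linarith
next
  case False
  define q where "q = length Qs"
  have qn: "q + 2 \<le> n" using False unfolding q_def by simp
  define D0 where "D0 = {i\<in>{1..n}. deg Qs i = 0}"
  define D1 where "D1 = {i\<in>{1..n}. deg Qs i = 1}"
  define R where "R = {1..n} - (D0 \<union> D1)"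
  have D: "D0 \<subseteq> {1..n}" "finite D0" "D1 \<subseteq> {1..n}" "finite D1" "\<forall>i\<in>D1. deg Qs i = 1"
    "\<forall>i\<in>D0. deg Qs i = 0" "D0 \<inter> D1 = {}"
    unfolding D0_def D1_def by auto
  have Rge: "\<forall>i\<in>R. 2 \<le> deg Qs i" unfolding R_def D0_def D1_def by auto
  have finR: "finite R" unfolding R_def by simp
  have cR: "card R = n - card D0 - card D1"
  proof -
    have "card (D0 \<union> D1) = card D0 + card D1" using D by (simp add: card_Un_disjoint)
    moreover have "card R = n - card (D0 \<union> D1)" unfolding R_def using D by (simp add: card_Diff_subset)
    ultimately show ?thesis by simp
  qed
  have cD: "card D0 + card D1 \<le> n"
  proof -
    have "card (D0 \<union> D1) \<le> card {1..n}" using D by (intro card_mono) auto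
    then show ?thesis using D by (simp add: card_Un_disjoint)
  qed
  have sumeq: "(\<Sum>i\<in>{1..n}. deg Qs i) = card D1 + (\<Sum>i\<in>R. deg Qs i)"
  proof -
    have "(\<Sum>i\<in>{1..n}. deg Qs i) = (\<Sum>i\<in>{1..n} - (D0 \<union> D1). deg Qs i) + (\<Sum>i\<in>D0 \<union> D1. deg Qs i)"
      by (rule sum.subset_diff) (use D in auto)
    moreover have "(\<Sum>i\<in>D0 \<union> D1. deg Qs i) = (\<Sum>i\<in>D0. deg Qs i) + (\<Sum>i\<in>D1. deg Qs i)"
      using D by (simp add: sum.union_disjoint)
    moreover have "(\<Sum>i\<in>D0. deg Qs i) = 0" using D by simp
    moreover have "(\<Sum>i\<in>D1. deg Qs i) = card D1" using D by simp
    ultimately show ?thesis unfolding R_def by simp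
  qed
  have sumR: "2 * card R \<le> (\<Sum>i\<in>R. deg Qs i)"
  proof -
    have "(\<Sum>i\<in>R. 2) \<le> (\<Sum>i\<in>R. deg Qs i)" by (rule sum_mono) (use Rge in auto)
    then show ?thesis by (simp add: mult.commute)
  qed
  have total: "(\<Sum>i\<in>{1..n}. deg Qs i) = q * k" using sum_all[OF succ] unfolding q_def by simp
  define p where "p t = card (Qs ! t \<inter> D1)" for t
  have cD1: "card D1 = (\<Sum>t<q. p t)" unfolding p_def q_def by (rule card_D1[OF D(4,5)])
  have D0le: "card D0 \<le> 1"
  proof (rule ccontr)
    assume "\<not> card D0 \<le> 1"
    then obtain x y where "x \<in> D0" "y \<in> D0" "x \<noteq> y" using two_elems[of D0] D(2) by blast
    then show False using E3[OF succ assms(4), of x y] assms(2,5) unfolding D0_def by auto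
  qed
  have p2: "p t \<le> 2" if t: "t < q" for t
  proof (rule ccontr)
    assume "\<not> p t \<le> 2"
    then have "3 \<le> card (Qs ! t \<inter> D1)" unfolding p_def by simp
    then obtain x y z where "x \<in> Qs ! t \<inter> D1" "y \<in> Qs ! t \<inter> D1" "z \<in> Qs ! t \<inter> D1"
      "x \<noteq> y" "y \<noteq> z" "x \<noteq> z"
      using three_elems[of "Qs ! t \<inter> D1"] D(4) by blast
    then show False using E5[OF succ assms(4,1,2,5), of t x y z] t D(5) unfolding q_def by auto
  qed
  have pp: "p t \<le> 1 \<or> p s \<le> 1" if ts: "t < q" "s < q" "t \<noteq> s" for t s
  proof (rule ccontr)
    assume "\<not> (p t \<le> 1 \<or> p s \<le> 1)"
    then have "\<not> card (Qs ! t \<inter> D1) \<le> 1" "\<not> card (Qs ! s \<inter> D1) \<le> 1" unfolding p_def by auto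
    moreover have "finite (Qs ! t \<inter> D1)" "finite (Qs ! s \<inter> D1)" using D(4) by auto
    ultimately obtain x y x' y' where "x \<in> Qs ! t \<inter> D1" "y \<in> Qs ! t \<inter> D1" "x \<noteq> y"
      "x' \<in> Qs ! s \<inter> D1" "y' \<in> Qs ! s \<inter> D1" "x' \<noteq> y'"
      using two_elems by metis
    then show False using E6[OF succ assms(4,1,2,5), of t x y s x' y'] ts D(5) unfolding q_def by auto
  qed
  show ?thesis
  proof (cases "card D0 = 0")
    case True
    have "card D1 \<le> q + 1" unfolding cD1 by (rule sum_le_q1) (use p2 pp in auto)
    then show ?thesis using sumeq sumR total cR True cD unfolding q_def by (simp add: algebra_simps)
  next
    case False
    then have c1: "card D0 = 1" using D0le by simp
    then obtain b where b: "D0 = {b}" by (rule card_1_singletonE)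
    have bb: "b \<in> {1..n}" "deg Qs b = 0" using b unfolding D0_def by auto
    have p1: "p t \<le> 1" if t: "t < q" for t
    proof (rule ccontr)
      assume "\<not> p t \<le> 1"
      then obtain x y where "x \<in> Qs ! t \<inter> D1" "y \<in> Qs ! t \<inter> D1" "x \<noteq> y"
        using two_elems[of "Qs ! t \<inter> D1"] D(4) unfolding p_def by auto
      then show False using E4[OF succ assms(4,1,2,5) bb, of t x y] t D(5) unfolding q_def by auto
    qed
    have "card D1 \<le> (\<Sum>t<q. 1)" unfolding cD1 by (rule sum_mono) (use p1 in auto)
    then have D1q: "card D1 \<le> q" by simp
    show ?thesis
    proof (cases "card D1 < q")
      case True
      then show ?thesis using sumeq sumR total cR c1 cD unfolding q_def by (simp add: algebra_simps)
    next
      case False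
      then have D1q': "card D1 = q" using D1q by simp
      have all1: "p t = 1" if "t < q" for t
        using sum_all_one[of q p t] p1 D1q' cD1 that by auto
      show ?thesis
      proof (cases "\<exists>x\<in>R. 3 \<le> deg Qs x")
        case True
        then obtain x0 where x0: "x0 \<in> R" "3 \<le> deg Qs x0" by blast
        have "(\<Sum>i\<in>R. deg Qs i) = deg Qs x0 + (\<Sum>i\<in>R - {x0}. deg Qs i)"
          by (rule sum.remove[OF finR x0(1)])
        moreover have "(\<Sum>i\<in>R - {x0}. 2) \<le> (\<Sum>i\<in>R - {x0}. deg Qs i)" by (rule sum_mono) (use Rge in auto)
        moreover have "card (R - {x0}) = card R - 1" using x0 finR by simp
        moreover have "card R \<ge> 1" using x0 finR card_gt_0_iff[of R] by auto
        ultimately have "2 * card R + 1 \<le> (\<Sum>i\<in>R. deg Qs i)" using x0(2) by (simp add: mult.commute)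
        then show ?thesis using sumeq total cR c1 cD D1q' unfolding q_def by (simp add: algebra_simps)
      next
        case False
        have "card R \<ge> 1" using cR c1 D1q' qn by simp
        then have "R \<noteq> {}" by auto
        then obtain x where x: "x \<in> R" by blast
        have "2 \<le> deg Qs x" "\<not> 3 \<le> deg Qs x" using x Rge False by auto
        then have dx: "deg Qs x = 2" by simp
        then have "card {t. t < length Qs \<and> x \<in> Qs ! t} = 2" unfolding deg_def by simp
        then have "\<exists>a b. {t. t < length Qs \<and> x \<in> Qs ! t} = {a, b} \<and> a \<noteq> b"
          by (rule card_2_iff[THEN iffD1])
        then obtain t1 t2 where tt: "{t. t < length Qs \<and> x \<in> Qs ! t} = {t1, t2}" "t1 \<noteq> t2"
          by (elim exE conjE) (rule that)
        have "t1 \<in> {t. t < length Qs \<and> x \<in> Qs ! t}" "t2 \<in> {t. t < length Qs \<and> x \<in> Qs ! t}"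
          unfolding tt(1) by simp_all
        then have tt': "t1 < length Qs" "x \<in> Qs ! t1" "t2 < length Qs" "x \<in> Qs ! t2" by simp_all
        have "p t1 = 1" "p t2 = 1" using all1 tt' unfolding q_def by auto
        then have "Qs ! t1 \<inter> D1 \<noteq> {}" "Qs ! t2 \<inter> D1 \<noteq> {}" unfolding p_def by auto
        then obtain i j where ij: "i \<in> Qs ! t1" "i \<in> D1" "j \<in> Qs ! t2" "j \<in> D1" by blast
        show ?thesis
          using E7[OF succ assms(4,2,5) bb tt'(1,3) tt(2) tt'(2,4) dx ij(1) _ ij(3)] ij D(5) by auto
      qed
    qed
  qed
qed



lemma oddk_even_n:
  assumes "odd k" "3 \<le> k" and succ: "cm_successful k n Qs" and "even n" "2*k*k + 4 \<le> n"
  shows "n * d_C (k-1) (n-1) \<le> length Qs * k"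
proof -
  have "d_C (k-1) (n-1) \<le> deg Qs i" if "i \<in> {1..n}" for i
    using oddk_main[OF assms(1,2) succ that that] assms(4,5) unfolding deg_def by simp
  then have "(\<Sum>i\<in>{1..n}. d_C (k-1) (n-1)) \<le> (\<Sum>i\<in>{1..n}. deg Qs i)" by (intro sum_mono) auto
  then show ?thesis using sum_all[OF succ] by simp
qed

lemma oddk_odd_n:
  assumes "odd k" "3 \<le> k" and succ: "cm_successful k n Qs" and "odd n" "2*k*k + 4 \<le> n"
  shows "(n - 1) * d_C (k-1) (n-1) \<le> 2 * (length Qs * k)"
proof -
  define d where "d = d_C (k-1) (n-1)"
  have pair: "d \<le> deg Qs i + deg Qs i'" if "i \<in> {1..n}" "i' \<in> {1..n}" "i \<noteq> i'" for i i'
  proof -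
    have "d \<le> card {t. t < length Qs \<and> (i \<in> Qs ! t \<or> i' \<in> Qs ! t)}"
      using oddk_main[OF assms(1,2) succ that(1,2)] assms(4,5) that(3) unfolding d_def by simp
    also have "{t. t < length Qs \<and> (i \<in> Qs ! t \<or> i' \<in> Qs ! t)} =
        {t. t < length Qs \<and> i \<in> Qs ! t} \<union> {t. t < length Qs \<and> i' \<in> Qs ! t}" by auto
    also have "card \<dots> \<le> deg Qs i + deg Qs i'" unfolding deg_def by (rule card_Un_le)
    finally show ?thesis .
  qed
  have "1 \<in> {1..n}" using assms(5) by simp
  then obtain i0 where i0: "i0 \<in> {1..n}" "\<forall>j. j \<in> {1..n} \<longrightarrow> deg Qs i0 \<le> deg Qs j"
    using ex_has_least_nat[of "\<lambda>i. i \<in> {1..n}" 1 "deg Qs"] by blast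
  have "(\<Sum>j\<in>{1..n} - {i0}. d) \<le> (\<Sum>j\<in>{1..n} - {i0}. deg Qs j + deg Qs i0)"
    by (rule sum_mono) (use pair i0 in auto)
  also have "\<dots> \<le> (\<Sum>j\<in>{1..n} - {i0}. 2 * deg Qs j)"
    by (rule sum_mono) (use i0 in auto)
  also have "\<dots> \<le> (\<Sum>j\<in>{1..n}. 2 * deg Qs j)" by (rule sum_mono2) auto
  also have "\<dots> = 2 * (length Qs * k)" using sum_all[OF succ] by (simp add: sum_distrib_left[symmetric])
  finally have A: "(\<Sum>j\<in>{1..n} - {i0}. d) \<le> 2 * (length Qs * k)" .
  have C: "card ({1..n} - {i0}) = n - 1" using i0(1) by simp
  have B: "(\<Sum>j\<in>{1..n} - {i0}. d) = card ({1..n} - {i0}) * d" using sum_constant[of d "{1..n} - {i0}"] by (simp only: of_nat_id)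
  have "(n - 1) * d \<le> 2 * (length Qs * k)" using A B C by (simp only:)
  then show ?thesis unfolding d_def .
qed

lemma NCM_witness:
  assumes "N_CM k n = enat q"
  shows "\<exists>Qs. length Qs = q \<and> cm_successful k n Qs"
proof -
  define S where "S = {q. \<exists>Qs. length Qs = q \<and> cm_successful k n Qs}"
  have N: "N_CM k n = Inf (enat ` S)" unfolding N_CM_def S_def ..
  have ne: "enat ` S \<noteq> {}"
  proof
    assume "enat ` S = {}"
    then have "Inf (enat ` S) = \<infinity>" by (simp add: Inf_enat_def)
    then show False using assms N by simp
  qed
  have "Inf (enat ` S) = (LEAST x. x \<in> enat ` S)" using ne by (simp add: Inf_enat_def)
  then have L: "(LEAST x. x \<in> enat ` S) = enat q" using assms N by simp
  obtain x0 where "x0 \<in> enat ` S" using ne by blast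
  then have "(LEAST x. x \<in> enat ` S) \<in> enat ` S" by (rule LeastI)
  then have "enat q \<in> enat ` S" using L by simp
  then have "q \<in> S" by (simp add: image_iff)
  then show ?thesis unfolding S_def by simp
qed



lemma bound_for_Qs:
  assumes k2: "k \<ge> 2" and succ: "cm_successful k n Qs" and big: "2*k*k + 4*k + 10 \<le> n"
  shows "real (length Qs) \<ge> cm_bound k n"
proof -
  define q where "q = length Qs"
  have big1: "4*k+4 \<le> n" "2*k*k + 4 \<le> n" using big by linarith+
  have kpos: "real k > 0" using k2 by simp
  show ?thesis
  proof (cases "even k")
    case ek: True
    show ?thesis
    proof (cases "even n")
      case en: True
      have "2*n \<le> q * (k+1)" unfolding q_def by (rule evk_evn[OF ek k2 succ en big1(1)])
      then have "real (2*n) \<le> real (q * (k+1))" by (simp only: of_nat_le_iff)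
      then have "2 * real n \<le> real q * (real k + 1)" by (simp add: algebra_simps)
      then have "2 * real n / (real k + 1) \<le> real q" using kpos by (simp add: pos_divide_le_eq)
      then show ?thesis unfolding cm_bound_def q_def using ek en by simp
    next
      case on: False
      have "2*n \<le> q * (k+1) + 1" unfolding q_def by (rule evk_odd[OF ek k2 succ on big1(1)])
      then have "real (2*n) \<le> real (q * (k+1) + 1)" by (simp only: of_nat_le_iff)
      then have "2 * real n - 1 \<le> real q * (real k + 1)" by (simp add: algebra_simps)
      then have "(2 * real n - 1) / (real k + 1) \<le> real q" using kpos by (simp add: pos_divide_le_eq)
      then show ?thesis unfolding cm_bound_def q_def using ek on by simp
    qed
  next
    case ok: False
    then have ok': "odd k" by simp
    have k3: "3 \<le> k" using k2 ok by presburger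
    define d where "d = d_C (k-1) (n-1)"
    show ?thesis
    proof (cases "even n")
      case en: True
      have "n * d \<le> q * k" unfolding q_def d_def by (rule oddk_even_n[OF ok' k3 succ en big1(2)])
      then have "real (n * d) \<le> real (q * k)" by (simp only: of_nat_le_iff)
      then have "real n * real d \<le> real q * real k" by simp
      then have "real n / real k * real d \<le> real q" using kpos by (simp add: field_simps)
      then have "\<lceil>real n / real k * real d\<rceil> \<le> int q" by (simp add: ceiling_le_iff)
      then have "real_of_int \<lceil>real n / real k * real d\<rceil> \<le> real q" by linarith
      then show ?thesis unfolding cm_bound_def q_def d_def using ok en by simp
    next
      case on: False
      have "(n - 1) * d \<le> 2 * (q * k)" unfolding q_def d_def by (rule oddk_odd_n[OF ok' k3 succ on big1(2)])
      then have "real ((n - 1) * d) \<le> real (2 * (q * k))" by (simp only: of_nat_le_iff)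
      moreover have "real (n - 1) = real n - 1" using big by simp
      ultimately have "(real n - 1) * real d \<le> 2 * (real q * real k)" by simp
      then have "(real n - 1) / (2 * real k) * real d \<le> real q" using kpos by (simp add: field_simps)
      then have "\<lceil>(real n - 1) / (2 * real k) * real d\<rceil> \<le> int q" by (simp add: ceiling_le_iff)
      then have "real_of_int \<lceil>(real n - 1) / (2 * real k) * real d\<rceil> \<le> real q" by linarith
      then show ?thesis unfolding cm_bound_def q_def d_def using ok on by simp
    qed
  qed
qed

theorem theorem7:
  fixes k :: nat
  assumes "k \<ge> 2"
  shows "\<exists>n0. \<forall>n \<ge> n0. \<forall>q. N_CM k n = enat q \<longrightarrow> real q \<ge> cm_bound k n"
proof (intro exI allI impI)
  fix n q
  assume n: "2*k*k + 4*k + 10 \<le> n" and N: "N_CM k n = enat q"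
  obtain Qs where "length Qs = q" "cm_successful k n Qs" using NCM_witness[OF N] by blast
  then show "real q \<ge> cm_bound k n" using bound_for_Qs[OF assms _ n] by blast
qed

end
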